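(* In the standing setting, with $\mathbf K_1,\mathbf K_2$ constant symmetric positive definite and the control law $\mathbf u(t)=-(\mathbf I_3+\mathbf K_2\mathbf K_1)\mathbf z_1(t)-(\mathbf K_1+\mathbf K_2)\mathbf z_2(t)-\mathbf f_a(t,\mathbf z_1(t))$, let $t_s>0$, let $$\mathbf X=\begin{bmatrix}\mathbf I_3+\mathbf K_1\mathbf K_1 & \mathbf K_1\\ \mathbf K_1&\mathbf I_3\end{bmatrix},\qquad r=\min_{j=1,\dots,P,\ t\in[0,t_s]}\|\mathbf w_j(t)\|,$$ and define the open ellipsoid $\mathcal E=\{\mathbf y\in\mathbb R^6:\mathbf y^T\mathbf X\mathbf y<\lambda_{\min}(\mathbf X)r^2\}$. Then $\mathcal E\subset\mathcal D(t)$ for all $t\in[0,t_s]$, every closed-loop trajectory with $\mathbf z_0\in\mathcal E$ remains in $\mathcal E$ for all $t\in[0,t_s]$, and there exist constants $c_1,c_2>0$ (depending only on $\mathbf K_1,\mathbf K_2$) such that $\|\mathbf z(t)\|\le c_1\|\mathbf z_0\|e^{-c_2t}$ for all $t\in[0,t_s]$ and all $\mathbf z_0\in\mathcal E$.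
   Context: Standing setting: Let $P\ge1$. For $j=1,\dots,P$ let $\mu_j>0$ and let $\mathbf r_j:[0,\infty)\to\mathbb R^3$ be continuously differentiable, with $\mathbf r_1\equiv\mathbf 0$. Let $\mathbf r^*:[0,\infty)\to\mathbb R^3$ be continuously differentiable (the target trajectory) with $\mathbf r^*(t)\neq\mathbf r_j(t)$ for all $t\ge0$ and all $j$, and set $\mathbf w_j(t):=\mathbf r_j(t)-\mathbf r^*(t)$. For $t\ge0$ and $\mathbf z_1\in\mathbb R^3$ with $\mathbf z_1\ne\mathbf w_j(t)$ for all $j$, define $$\mathbf f_a(t,\mathbf z_1)=\sum_{j=1}^P\mu_j\left(\frac{\mathbf w_j(t)-\mathbf z_1}{\|\mathbf w_j(t)-\mathbf z_1\|^3}-\frac{\mathbf w_j(t)}{\|\mathbf w_j(t)\|^3}\right).$$ The controlled error dynamics are $\dot{\mathbf z}_1(t)=\mathbf z_2(t)$, $\dot{\mathbf z}_2(t)=\mathbf f_a(t,\mathbf z_1(t))+\mathbf u(t)$, with state $\mathbf z=(\mathbf z_1,\mathbf z_2)\in\mathbb R^6$, control $\mathbf u(t)\in\mathbb R^3$, initial time $0$ and $\mathbf z_0:=\mathbf z(0)$. The vector field is defined on $\mathcal D(t)=\{(\mathbf x,\mathbf y)\in\mathbb R^6:\mathbf x\neq\mathbf w_j(t),\ j=1,\dots,P\}$. $\|\cdot\|$ is the Euclidean norm, $\lambda_{\min},\lambda_{\max}$ denote smallest/largest eigenvalues. Note $r>0$ since the $\mathbf w_j$ are continuous and nonvanishing on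 $[0,t_s]$. *)

theory Defs
  imports "HOL-Analysis.Analysis"
begin

text \<open>Vectors in R^3 are real^3; states in R^6 are pairs (z1, z2) :: (real^3) \<times> (real^3)
  (with the Euclidean product norm and inner product).\<close>

definition C1_on :: "real set \<Rightarrow> (real \<Rightarrow> real^3) \<Rightarrow> bool" where
  "C1_on S f \<longleftrightarrow> (\<exists>f'. continuous_on S f' \<and>
      (\<forall>t\<in>S. (f has_vector_derivative f' t) (at t within S)))"

definition sym_posdef :: "real^3^3 \<Rightarrow> bool" where
  "sym_posdef K \<longleftrightarrow> transpose K = K \<and> (\<forall>x. x \<noteq> 0 \<longrightarrow> x \<bullet> (K *v x) > 0)"

definition wv :: "(nat \<Rightarrow> real \<Rightarrow> real^3) \<Rightarrow> (real \<Rightarrow> real^3) \<Rightarrow> nat \<Rightarrow> real \<Rightarrow> real^3" where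
  "wv rr rs j t = rr j t - rs t"

definition fa :: "nat \<Rightarrow> (nat \<Rightarrow> real) \<Rightarrow> (nat \<Rightarrow> real \<Rightarrow> real^3) \<Rightarrow> (real \<Rightarrow> real^3)
                   \<Rightarrow> real \<Rightarrow> real^3 \<Rightarrow> real^3" where
  "fa P mu rr rs t z1 = (\<Sum>j\<in>{1..P}. mu j *\<^sub>R
      ((1 / norm (wv rr rs j t - z1) ^ 3) *\<^sub>R (wv rr rs j t - z1)
       - (1 / norm (wv rr rs j t) ^ 3) *\<^sub>R wv rr rs j t))"

definition Dom :: "nat \<Rightarrow> (nat \<Rightarrow> real \<Rightarrow> real^3) \<Rightarrow> (real \<Rightarrow> real^3) \<Rightarrow> real
                    \<Rightarrow> ((real^3) \<times> (real^3)) set" where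
  "Dom P rr rs t = {(x, y). \<forall>j\<in>{1..P}. x \<noteq> wv rr rs j t}"

definition ctrl :: "real^3^3 \<Rightarrow> real^3^3 \<Rightarrow> nat \<Rightarrow> (nat \<Rightarrow> real) \<Rightarrow> (nat \<Rightarrow> real \<Rightarrow> real^3)
                    \<Rightarrow> (real \<Rightarrow> real^3) \<Rightarrow> real \<Rightarrow> (real^3) \<times> (real^3) \<Rightarrow> real^3" where
  "ctrl K1 K2 P mu rr rs t z =
     - ((mat 1 + K2 ** K1) *v fst z) - ((K1 + K2) *v snd z) - fa P mu rr rs t (fst z)"

text \<open>The symmetric 6x6 matrix X = [[I + K1 K1, K1],[K1, I]] acting on R^6 = R^3 x R^3\<close>
definition Xmat :: "real^3^3 \<Rightarrow> (real^3) \<times> (real^3) \<Rightarrow> (real^3) \<times> (real^3)" where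
  "Xmat K1 y = ((mat 1 + K1 ** K1) *v fst y + K1 *v snd y, K1 *v fst y + snd y)"

definition lambda_min :: "((real^3) \<times> (real^3) \<Rightarrow> (real^3) \<times> (real^3)) \<Rightarrow> real" where
  "lambda_min A = Inf {l. \<exists>v. v \<noteq> 0 \<and> A v = l *\<^sub>R v}"

definition rmin :: "nat \<Rightarrow> (nat \<Rightarrow> real \<Rightarrow> real^3) \<Rightarrow> (real \<Rightarrow> real^3) \<Rightarrow> real \<Rightarrow> real" where
  "rmin P rr rs ts = Inf {norm (wv rr rs j t) | j t. j \<in> {1..P} \<and> t \<in> {0..ts}}"

definition Ell :: "real^3^3 \<Rightarrow> real \<Rightarrow> ((real^3) \<times> (real^3)) set" where
  "Ell K1 r = {y. y \<bullet> Xmat K1 y < lambda_min (Xmat K1) * r ^ 2}"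

end

theory Submission
  imports Defs
begin


lemma rayleigh:
  fixes A :: "'a::euclidean_space \<Rightarrow> 'a"
  assumes lin: "linear A" and sym: "\<And>x y. A x \<bullet> y = x \<bullet> A y"
  shows "\<exists>v m. norm v = 1 \<and> A v = m *\<^sub>R v \<and> m = v \<bullet> A v \<and> (\<forall>y. m * (norm y)^2 \<le> y \<bullet> A y)"
proof -
  have bl: "bounded_linear A" using lin linear_conv_bounded_linear by blast
  have ne: "sphere (0::'a) 1 \<noteq> {}" using vector_choose_size[of 1] by auto
  have co: "continuous_on (sphere 0 1) (\<lambda>y. y \<bullet> A y)"
    by (intro continuous_intros linear_continuous_on bl)
  obtain v where v: "v \<in> sphere 0 1" and vmin: "\<And>y. y \<in> sphere 0 1 \<Longrightarrow> v \<bullet> A v \<le> y \<bullet> A y"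
    using continuous_attains_inf[OF compact_sphere ne co] by blast
  define m where "m = v \<bullet> A v"
  have nv: "norm v = 1" using v by simp
  have hom: "m * (norm y)^2 \<le> y \<bullet> A y" for y
  proof (cases "y = 0")
    case True then show ?thesis using linear_0[OF lin] by simp
  next
    case False
    define u where "u = (1 / norm y) *\<^sub>R y"
    have "u \<in> sphere 0 1" using False by (simp add: u_def)
    then have "m \<le> u \<bullet> A u" using vmin m_def by simp
    also have "u \<bullet> A u = (y \<bullet> A y) / (norm y)^2"
      by (simp add: u_def linear_scale[OF lin] power2_eq_square)
    finally show ?thesis using False by (simp add: field_simps)
  qed
  define Q where "Q y = y \<bullet> A y - m * (norm y)^2" for y
  have Qnn: "0 \<le> Q y" for y using hom[of y] by (simp add: Q_def)
  define w where "w = A v - m *\<^sub>R v"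
  have exp: "Q (v + s *\<^sub>R w) = Q v + 2 * s * (w \<bullet> w) + s^2 * Q w" for s
  proof -
    have h1: "w \<bullet> A v = w \<bullet> w + m * (v \<bullet> w)" by (simp add: w_def inner_diff_right inner_commute algebra_simps)
    have h2: "v \<bullet> A w = w \<bullet> A v" using sym[of w v] by (simp add: inner_commute)
    show ?thesis
      unfolding Q_def power2_norm_eq_inner
      by (simp add: linear_add[OF lin] linear_scale[OF lin] inner_add_left inner_add_right
          h2 h1 algebra_simps inner_commute[of v w] power2_eq_square)
  qed
  have Qv: "Q v = 0" using nv by (simp add: Q_def m_def)
  have "w = 0"
  proof (rule ccontr)
    assume "w \<noteq> 0"
    then have n: "w \<bullet> w > 0" by simp
    define q where "q = Q w"
    have q: "q \<ge> 0" using Qnn q_def by simp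
    define s where "s = - (w \<bullet> w) / (q + 1)"
    have "0 \<le> 2 * s * (w \<bullet> w) + s^2 * q" using Qnn[of "v + s *\<^sub>R w"] exp[of s] Qv q_def by simp
    also have "\<dots> = s * (2 * (w \<bullet> w) + s * q)" by (simp add: power2_eq_square algebra_simps)
    also have "\<dots> < 0"
    proof (rule mult_neg_pos)
      show "s < 0" using n q by (simp add: s_def)
      have "(w \<bullet> w) * q / (q + 1) \<le> (w \<bullet> w)" using n q by (simp add: field_simps)
      then have "- (w \<bullet> w) \<le> s * q" by (simp add: s_def)
      then show "0 < 2 * (w \<bullet> w) + s * q" using n by linarith
    qed
    finally show False by simp
  qed
  then have "A v = m *\<^sub>R v" by (simp add: w_def)
  then show ?thesis using nv hom m_def by blast
qed



lemma sym_mat: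
  assumes "sym_posdef K"
  shows "(K *v x) \<bullet> y = x \<bullet> (K *v y)"
proof -
  have "transpose K = K" using assms by (simp add: sym_posdef_def)
  then have "x v* K = K *v x" by (metis transpose_matrix_vector)
  then show ?thesis using dot_lmul_matrix[of x K y] by simp
qed

lemma posdef_bound:
  assumes "sym_posdef K"
  shows "\<exists>k>0. \<forall>x. k * (norm x)^2 \<le> x \<bullet> (K *v x)"
proof -
  have "linear ((*v) K)" by (rule matrix_vector_mul_linear)
  moreover have "\<And>x y. (K *v x) \<bullet> y = x \<bullet> (K *v y)" using sym_mat[OF assms] .
  ultimately obtain v m where v: "norm v = 1" and m: "m = v \<bullet> (K *v v)" and b: "\<forall>y. m * (norm y)^2 \<le> y \<bullet> (K *v y)"
    using rayleigh[of "(*v) K"] by blast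
  have "v \<noteq> 0" using v by auto
  then have "m > 0" using assms m unfolding sym_posdef_def by auto
  then show ?thesis using b by blast
qed

lemma Xmat_linear: "linear (Xmat K1)"
  by (rule linearI) (auto simp: Xmat_def algebra_simps)

lemma Xmat_sym:
  assumes "sym_posdef K1"
  shows "Xmat K1 x \<bullet> y = x \<bullet> Xmat K1 y"
proof -
  obtain a b where x: "x = (a, b)" by (cases x)
  obtain c d where y: "y = (c, d)" by (cases y)
  show ?thesis unfolding x y
    by (simp add: Xmat_def inner_add_left inner_add_right matrix_vector_mul_assoc[symmetric]
      matrix_vector_mult_add_rdistrib sym_mat[OF assms])
qed

lemma Xmat_form:
  assumes "sym_posdef K1"
  shows "y \<bullet> Xmat K1 y = (norm (fst y))^2 + (norm (snd y + K1 *v fst y))^2"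
proof -
  obtain a b where y: "y = (a, b)" by (cases y)
  show ?thesis unfolding y
    by (simp add: Xmat_def power2_norm_eq_inner inner_add_left inner_add_right matrix_vector_mul_assoc[symmetric]
      matrix_vector_mult_add_rdistrib sym_mat[OF assms])
qed
lemma key_identity:
  assumes "sym_posdef K1"
  shows "(snd y, fa P mu rr rs t (fst y) + ctrl K1 K2 P mu rr rs t y) \<bullet> Xmat K1 y
     = - (fst y \<bullet> (K1 *v fst y)) - ((snd y + K1 *v fst y) \<bullet> (K2 *v (snd y + K1 *v fst y)))"
proof -
  obtain a b where y: "y = (a, b)" by (cases y)
  have s1: "b \<bullet> (K1 *v (K1 *v a)) = (K1 *v b) \<bullet> (K1 *v a)" using sym_mat[OF assms] by metis
  have s2: "b \<bullet> (K1 *v b) = (K1 *v b) \<bullet> b" using sym_mat[OF assms] by (metis inner_commute)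
  have c: "fa P mu rr rs t a + ctrl K1 K2 P mu rr rs t (a, b) = - a - K2 *v (K1 *v a) - K1 *v b - K2 *v b"
    unfolding ctrl_def by (simp add: matrix_vector_mul_assoc[symmetric] algebra_simps)
  have x: "Xmat K1 (a, b) = (a + K1 *v (b + K1 *v a), b + K1 *v a)"
    unfolding Xmat_def by (simp add: matrix_vector_mul_assoc[symmetric] algebra_simps)
  have "(snd y, fa P mu rr rs t (fst y) + ctrl K1 K2 P mu rr rs t y) \<bullet> Xmat K1 y
     = (b, - a - K2 *v (K1 *v a) - K1 *v b - K2 *v b) \<bullet> (a + K1 *v (b + K1 *v a), b + K1 *v a)"
    unfolding y x by (simp only: fst_conv snd_conv c)
  also have "\<dots> = - (a \<bullet> (K1 *v a)) - ((b + K1 *v a) \<bullet> (K2 *v (b + K1 *v a)))"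
  proof -
    have e: "a \<bullet> b = b \<bullet> a" "(K1 *v b) \<bullet> b = b \<bullet> (K1 *v b)"
      "(K1 *v b) \<bullet> (K1 *v a) = b \<bullet> (K1 *v (K1 *v a))"
      "(K2 *v b) \<bullet> (K1 *v a) = (K1 *v a) \<bullet> (K2 *v b)"
      "(K2 *v (K1 *v a)) \<bullet> b = b \<bullet> (K2 *v (K1 *v a))"
      "(K2 *v b) \<bullet> b = b \<bullet> (K2 *v b)"
      "(K2 *v (K1 *v a)) \<bullet> (K1 *v a) = (K1 *v a) \<bullet> (K2 *v (K1 *v a))"
      "a \<bullet> (K1 *v b) = b \<bullet> (K1 *v a)"
      using sym_mat[OF assms] by (auto simp: inner_commute)
    show ?thesis
      apply (simp only: inner_Pair inner_add_left inner_add_right inner_diff_left inner_diff_right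
        inner_minus_left inner_minus_right matrix_vector_right_distrib)
      using e by linarith
  qed
  finally show ?thesis by (simp add: y)
qed


lemma rate:
  assumes K1: "sym_posdef K1"
    and k1: "\<forall>x. k1 * (norm x)^2 \<le> x \<bullet> (K1 *v x)"
    and k2: "\<forall>x. k2 * (norm x)^2 \<le> x \<bullet> (K2 *v x)"
    and c: "c \<le> k1" "c \<le> k2"
  shows "(snd y, fa P mu rr rs t (fst y) + ctrl K1 K2 P mu rr rs t y) \<bullet> Xmat K1 y \<le> - c * (y \<bullet> Xmat K1 y)"
proof -
  have a: "c * (norm (fst y))^2 \<le> fst y \<bullet> (K1 *v fst y)"
    using k1 c mult_right_mono[of c k1 "(norm (fst y))^2"] by (meson order_trans zero_le_power2)
  have b: "c * (norm (snd y + K1 *v fst y))^2 \<le> (snd y + K1 *v fst y) \<bullet> (K2 *v (snd y + K1 *v fst y))"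
    using k2 c mult_right_mono[of c k2 "(norm (snd y + K1 *v fst y))^2"] by (meson order_trans zero_le_power2)
  show ?thesis unfolding key_identity[OF K1] Xmat_form[OF K1] using a b by (simp add: algebra_simps)
qed



theorem corollary1:
  fixes K1 K2 :: "real^3^3"
  assumes "sym_posdef K1" and "sym_posdef K2"
  shows "\<exists>c1>0. \<exists>c2>0. \<forall>(P::nat) (mu::nat \<Rightarrow> real) (rr::nat \<Rightarrow> real \<Rightarrow> real^3)
            (rs::real \<Rightarrow> real^3) (ts::real).
     P \<ge> 1 \<and> (\<forall>j\<in>{1..P}. mu j > 0) \<and> (\<forall>j\<in>{1..P}. C1_on {0..} (rr j))
     \<and> (\<forall>t\<ge>0. rr 1 t = 0) \<and> C1_on {0..} rs
     \<and> (\<forall>t\<ge>0. \<forall>j\<in>{1..P}. rs t \<noteq> rr j t) \<and> ts > 0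
     \<longrightarrow>
       (\<forall>t\<in>{0..ts}. Ell K1 (rmin P rr rs ts) \<subseteq> Dom P rr rs t)
     \<and> (\<forall>(T::real) (z::real \<Rightarrow> (real^3) \<times> (real^3)).
          0 \<le> T \<and> T \<le> ts \<and> z 0 \<in> Ell K1 (rmin P rr rs ts)
          \<and> (\<forall>t\<in>{0..T}. z t \<in> Dom P rr rs t)
          \<and> (\<forall>t\<in>{0..T}. (z has_vector_derivative
                 (snd (z t), fa P mu rr rs t (fst (z t)) + ctrl K1 K2 P mu rr rs t (z t)))
                 (at t within {0..T}))
          \<longrightarrow> (\<forall>t\<in>{0..T}. z t \<in> Ell K1 (rmin P rr rs ts)
                  \<and> norm (z t) \<le> c1 * norm (z 0) * exp (- c2 * t)))"
proof -
  obtain k1 where k1p: "k1 > 0" and k1: "\<forall>x. k1 * (norm x)^2 \<le> x \<bullet> (K1 *v x)"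
    using posdef_bound[OF assms(1)] by blast
  obtain k2 where k2p: "k2 > 0" and k2: "\<forall>x. k2 * (norm x)^2 \<le> x \<bullet> (K2 *v x)"
    using posdef_bound[OF assms(2)] by blast
  define c where "c = min k1 k2"
  have cp: "c > 0" and ck: "c \<le> k1" "c \<le> k2" using k1p k2p by (auto simp: c_def)
  obtain v m where nv: "norm v = 1" and ev: "Xmat K1 v = m *\<^sub>R v" and mv: "m = v \<bullet> Xmat K1 v"
     and mb: "\<forall>y. m * (norm y)^2 \<le> y \<bullet> Xmat K1 y"
    using rayleigh[OF Xmat_linear Xmat_sym[OF assms(1)]] by blast
  have mpos: "m > 0"
  proof (rule ccontr)
    assume "\<not> m > 0"
    then have "(norm (fst v))^2 + (norm (snd v + K1 *v fst v))^2 \<le> 0"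
      using mv Xmat_form[OF assms(1), of v] by simp
    then have "fst v = 0" "snd v + K1 *v fst v = 0"
      by (smt (verit) zero_le_power2 zero_eq_power2 norm_eq_zero)+
    then have "v = 0" by (simp add: prod_eq_iff)
    then show False using nv by simp
  qed
  have lam: "lambda_min (Xmat K1) = m"
    unfolding lambda_min_def
  proof (rule cInf_eq_minimum)
    show "m \<in> {l. \<exists>v. v \<noteq> 0 \<and> Xmat K1 v = l *\<^sub>R v}" using nv ev by (intro CollectI exI[of _ v]) auto
  next
    fix l assume "l \<in> {l. \<exists>v. v \<noteq> 0 \<and> Xmat K1 v = l *\<^sub>R v}"
    then obtain u where u: "u \<noteq> 0" "Xmat K1 u = l *\<^sub>R u" by blast
    have a: "m * (norm u)^2 \<le> u \<bullet> Xmat K1 u" using mb by blast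
    have b: "u \<bullet> Xmat K1 u = l * (norm u)^2" using u(2) by (simp add: power2_norm_eq_inner)
    have "m * (norm u)^2 \<le> l * (norm u)^2" using a b by simp
    then show "m \<le> l" using u by simp
  qed
  have blX: "bounded_linear (Xmat K1)" using Xmat_linear linear_conv_bounded_linear by blast
  obtain B where Bp: "B > 0" and Bb: "\<And>y. norm (Xmat K1 y) \<le> norm y * B"
    using bounded_linear.pos_bounded[OF blX] by blast
  have VB: "y \<bullet> Xmat K1 y \<le> B * (norm y)^2" for y
  proof -
    have "y \<bullet> Xmat K1 y \<le> norm y * norm (Xmat K1 y)" by (rule norm_cauchy_schwarz)
    also have "\<dots> \<le> norm y * (norm y * B)" by (rule mult_left_mono[OF Bb norm_ge_zero])
    finally show ?thesis by (simp add: power2_eq_square algebra_simps)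
  qed
  have Vnn: "0 \<le> y \<bullet> Xmat K1 y" for y using Xmat_form[OF assms(1), of y] by simp
  show ?thesis
    apply (rule exI[of _ "sqrt (B / m)"], rule conjI, use Bp mpos in simp)
    apply (rule exI[of _ c], rule conjI, rule cp)
    apply (intro allI impI)
    subgoal premises H for P mu rr rs ts
  proof -
    define S where "S = {norm (wv rr rs j t) | j t. j \<in> {1..P} \<and> t \<in> {0..ts}}"
    have "norm (wv rr rs 1 0) \<in> S" unfolding S_def
      by (rule CollectI, rule exI[of _ 1], rule exI[of _ 0]) (use H in auto)
    then have Sne: "S \<noteq> {}" by blast
    have Sbd: "bdd_below S" unfolding S_def by (rule bdd_belowI[of _ 0]) auto
    have r0: "0 \<le> rmin P rr rs ts" unfolding rmin_def S_def[symmetric]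
      by (rule cInf_greatest[OF Sne]) (auto simp: S_def)
    have rle: "rmin P rr rs ts \<le> norm (wv rr rs j t)" if "j \<in> {1..P}" "t \<in> {0..ts}" for j t
      unfolding rmin_def S_def[symmetric] by (rule cInf_lower[OF _ Sbd]) (use that in \<open>auto simp: S_def\<close>)
    have part1: "\<forall>t\<in>{0..ts}. Ell K1 (rmin P rr rs ts) \<subseteq> Dom P rr rs t"
    proof (intro ballI subsetI)
      fix t y assume t: "t \<in> {0..ts}" and y: "y \<in> Ell K1 (rmin P rr rs ts)"
      have "m * (norm y)^2 < m * (rmin P rr rs ts)^2"
        using y mb lam unfolding Ell_def by (meson le_less_trans mem_Collect_eq)
      then have "(norm y)^2 < (rmin P rr rs ts)^2" using mpos by simp
      then have "norm y < rmin P rr rs ts" using r0 power2_less_imp_less by blast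
      then have "norm (fst y) < rmin P rr rs ts" 
      proof -
        have "norm (fst y) \<le> norm y" unfolding norm_prod_def by (rule real_le_rsqrt) simp
        then show ?thesis using \<open>norm y < rmin P rr rs ts\<close> by linarith
      qed
      then show "y \<in> Dom P rr rs t" unfolding Dom_def using rle t
        by (cases y) (fastforce)
    qed
    have part2: "\<forall>T z. 0 \<le> T \<and> T \<le> ts \<and> z 0 \<in> Ell K1 (rmin P rr rs ts)
          \<and> (\<forall>t\<in>{0..T}. z t \<in> Dom P rr rs t)
          \<and> (\<forall>t\<in>{0..T}. (z has_vector_derivative
                 (snd (z t), fa P mu rr rs t (fst (z t)) + ctrl K1 K2 P mu rr rs t (z t)))
                 (at t within {0..T}))
          \<longrightarrow> (\<forall>t\<in>{0..T}. z t \<in> Ell K1 (rmin P rr rs ts)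
                  \<and> norm (z t) \<le> sqrt (B / m) * norm (z 0) * exp (- c * t))"
    proof (intro allI impI ballI)
      fix T :: real and z :: "real \<Rightarrow> (real^3) \<times> (real^3)" and t :: real
      assume HZ: "0 \<le> T \<and> T \<le> ts \<and> z 0 \<in> Ell K1 (rmin P rr rs ts)
          \<and> (\<forall>t\<in>{0..T}. z t \<in> Dom P rr rs t)
          \<and> (\<forall>t\<in>{0..T}. (z has_vector_derivative
                 (snd (z t), fa P mu rr rs t (fst (z t)) + ctrl K1 K2 P mu rr rs t (z t)))
                 (at t within {0..T}))"
      assume t: "t \<in> {0..T}"
      define D where "D s = (snd (z s), fa P mu rr rs s (fst (z s)) + ctrl K1 K2 P mu rr rs s (z s))" for s
      define V where "V s = z s \<bullet> Xmat K1 (z s)" for s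
      define W where "W s = V s * exp (2 * c * s)" for s
      have Ddec: "D s \<bullet> Xmat K1 (z s) \<le> - c * V s" for s
        unfolding D_def V_def by (rule rate[OF assms(1) k1 k2 ck])
      have derW: "(W has_derivative (\<lambda>h. V x * (h * (exp (2 * c * x) * (2 * c))) + h * (2 * (D x \<bullet> Xmat K1 (z x))) * exp (2 * c * x)))
                   (at x within {0..t})" if x: "0 \<le> x" "x \<le> t" for x
      proof -
        have "x \<in> {0..T}" using x t by auto
        then have hz0: "(z has_derivative (\<lambda>h. h *\<^sub>R D x)) (at x within {0..T})"
          using HZ unfolding D_def has_vector_derivative_def by blast
        have hz: "(z has_derivative (\<lambda>h. h *\<^sub>R D x)) (at x within {0..t})"
          by (rule has_derivative_subset[OF hz0]) (use t in auto)
        have hX: "((\<lambda>s. Xmat K1 (z s)) has_derivative (\<lambda>h. Xmat K1 (h *\<^sub>R D x))) (at x within {0..t})"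
          by (rule bounded_linear.has_derivative[OF blX hz])
        have hV0: "(V has_derivative (\<lambda>h. z x \<bullet> Xmat K1 (h *\<^sub>R D x) + (h *\<^sub>R D x) \<bullet> Xmat K1 (z x))) (at x within {0..t})"
          unfolding V_def by (rule has_derivative_inner[OF hz hX])
        have eq: "z x \<bullet> Xmat K1 (h *\<^sub>R D x) + (h *\<^sub>R D x) \<bullet> Xmat K1 (z x) = h * (2 * (D x \<bullet> Xmat K1 (z x)))" for h
        proof -
          have "z x \<bullet> Xmat K1 (h *\<^sub>R D x) = h * (Xmat K1 (z x) \<bullet> D x)"
            using Xmat_sym[OF assms(1), of "z x" "D x"] by (simp add: linear_scale[OF Xmat_linear])
          then show ?thesis by (simp add: inner_commute algebra_simps)
        qed
        have hV: "(V has_derivative (\<lambda>h. h * (2 * (D x \<bullet> Xmat K1 (z x))))) (at x within {0..t})"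
          using hV0 unfolding eq .
        have hE: "((\<lambda>s. exp (2 * c * s)) has_real_derivative exp (2 * c * x) * (2 * c)) (at x within {0..t})"
          by (auto intro!: derivative_eq_intros)
        have hE': "((\<lambda>s. exp (2 * c * s)) has_derivative (\<lambda>h. h * (exp (2 * c * x) * (2 * c)))) (at x within {0..t})"
          using hE unfolding has_field_derivative_def by (rule has_derivative_eq_rhs) (simp add: fun_eq_iff)
        show ?thesis unfolding W_def[abs_def] using has_derivative_mult[OF hV hE'] by simp
      qed
      have tt: "0 \<le> t" using t by simp
      obtain x where x: "x \<in> {0..t}" and mvt: "W t - W 0 = V x * ((t - 0) * (exp (2 * c * x) * (2 * c))) + (t - 0) * (2 * (D x \<bullet> Xmat K1 (z x))) * exp (2 * c * x)"
        using mvt_very_simple[OF tt, of W, OF derW] by auto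
      have "V x * (t * (exp (2 * c * x) * (2 * c))) + t * (2 * (D x \<bullet> Xmat K1 (z x))) * exp (2 * c * x)
           = 2 * t * exp (2 * c * x) * (c * V x + D x \<bullet> Xmat K1 (z x))" by (simp add: algebra_simps)
      also have "\<dots> \<le> 0"
        using Ddec[of x] tt by (intro mult_nonneg_nonpos) auto
      finally have "W t \<le> W 0" using mvt by simp
      then have Wt: "V t * exp (2 * c * t) \<le> V 0" by (simp add: W_def)
      have Vt: "V t \<le> V 0 * exp (- (2 * c * t))"
      proof -
        have "V t = V t * exp (2 * c * t) * exp (- (2 * c * t))" by (simp add: exp_minus field_simps)
        also have "\<dots> \<le> V 0 * exp (- (2 * c * t))" using Wt by (intro mult_right_mono) auto
        finally show ?thesis .
      qed
      have V0: "0 \<le> V 0" unfolding V_def by (rule Vnn)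
      have ex1: "exp (- (2 * c * t)) \<le> 1" using cp tt by simp
      have "V t \<le> V 0" using Vt V0 ex1 mult_left_mono[OF ex1 V0] by linarith
      then have ell: "z t \<in> Ell K1 (rmin P rr rs ts)"
        using HZ unfolding Ell_def V_def by auto
      have "m * (norm (z t))^2 \<le> V t" unfolding V_def using mb by blast
      also have "\<dots> \<le> V 0 * exp (- (2 * c * t))" by (rule Vt)
      also have "\<dots> \<le> B * (norm (z 0))^2 * exp (- (2 * c * t))"
        by (rule mult_right_mono) (auto simp: V_def VB)
      finally have "(norm (z t))^2 \<le> (B / m) * (norm (z 0))^2 * exp (- (2 * c * t))"
        using mpos by (simp add: field_simps)
      also have "\<dots> = (sqrt (B / m) * norm (z 0) * exp (- c * t))^2"
      proof -
        have e: "exp (- (2 * c * t)) = (exp (- c * t))^2"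
          by (simp add: power2_eq_square exp_add[symmetric])
        have q: "(sqrt (B / m))^2 = B / m" using Bp mpos by simp
        show ?thesis unfolding power_mult_distrib e q ..
      qed
      finally have nrm: "norm (z t) \<le> sqrt (B / m) * norm (z 0) * exp (- c * t)"
        by (rule power2_le_imp_le) (use Bp mpos in auto)
      show "z t \<in> Ell K1 (rmin P rr rs ts) \<and> norm (z t) \<le> sqrt (B / m) * norm (z 0) * exp (- c * t)"
        using ell nrm by blast
    qed
    show ?thesis using part1 part2 by blast
  qed
  done
qed

end
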